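(* In the linear deterministic diamond network with a disturbing node with gains $n_1,n_2,n_3,n_4,m$, suppose $n_1>n_2$, $n_4\ge n_3$ and $m>n_2$. Then the linear capacity is $C=\min(n_1,n_3)$.
   Context: The shift matrix $Q$ is the $q\times q$ matrix over $\mathbb{F}_2$ with $Q_{i+1,i}=1$ for $1\le i\le q-1$ and all other entries $0$, where $q=\max(n_1,n_2,n_3,n_4,m)$ and all gains are nonnegative integers. Network: source $S$, relays $A,B$, destination $D$, disturbing node $M$; gains $n_1$ ($S\to A$), $n_2$ ($S\to B$), $n_3$ ($A\to D$), $n_4$ ($B\to D$), $m$ ($M\to A$ and $M\to B$). Each node transmits $x_i\in\mathbb{F}_2^q$ and receives $y_j=\sum_{k:(k,j)\text{ an edge}}Q^{q-n_{(k,j)}}x_k$; relays use linear maps $x_A=G_Ay_A$, $x_B=G_By_B$ with $G_A,G_B$ arbitrary $q\times q$ matrices over $\mathbb{F}_2$. Then $y_D=G_Sx_S+G_Mx_M$ with $G_S=Q^{q-n_3}G_AQ^{q-n_1}+Q^{q-n_4}G_BQ^{q-n_2}$ and $G_M=Q^{q-n_3}G_AQ^{q-m}+Q^{q-n_4}G_BQ^{q-m}$. The rate $R(G_A,G_B)$ is the maximum dimension of a subspace $\mathcal{X}\subseteq\mathbb{F}_2^q$ such that for all $x_S,x_S'\in\mathcal{X}$, $x_M,x_M'\in\mathbb{F}_2^q$, $G_Sx_S+G_Mx_M=G_Sx_S'+G_Mx_M'$ implies $x_S=x_S'$. The linear capacity is $C=\max_{G_A,G_B}R(G_A,G_B)$.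 *)

theory Defs
  imports "HOL-Library.Z2" "Jordan_Normal_Form.VS_Connect"
begin

definition net_q :: "nat \<Rightarrow> nat \<Rightarrow> nat \<Rightarrow> nat \<Rightarrow> nat \<Rightarrow> nat" where
  "net_q n1 n2 n3 n4 m = max n1 (max n2 (max n3 (max n4 m)))"

text \<open>Shift matrix: \<open>Q_{i+1,i} = 1\<close> (1-indexed), i.e. entry (i,j) is 1 iff i = j+1 (0-indexed).\<close>
definition shift_mat :: "nat \<Rightarrow> bit mat" where
  "shift_mat q = mat q q (\<lambda>(i, j). if i = Suc j then 1 else 0)"

definition G_S :: "nat \<Rightarrow> nat \<Rightarrow> nat \<Rightarrow> nat \<Rightarrow> nat \<Rightarrow> bit mat \<Rightarrow> bit mat \<Rightarrow> bit mat" where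
  "G_S n1 n2 n3 n4 m GA GB =
     (let q = net_q n1 n2 n3 n4 m; Q = shift_mat q in
      Q ^\<^sub>m (q - n3) * GA * Q ^\<^sub>m (q - n1) + Q ^\<^sub>m (q - n4) * GB * Q ^\<^sub>m (q - n2))"

definition G_M :: "nat \<Rightarrow> nat \<Rightarrow> nat \<Rightarrow> nat \<Rightarrow> nat \<Rightarrow> bit mat \<Rightarrow> bit mat \<Rightarrow> bit mat" where
  "G_M n1 n2 n3 n4 m GA GB =
     (let q = net_q n1 n2 n3 n4 m; Q = shift_mat q in
      Q ^\<^sub>m (q - n3) * GA * Q ^\<^sub>m (q - m) + Q ^\<^sub>m (q - n4) * GB * Q ^\<^sub>m (q - m))"

definition decodable :: "nat \<Rightarrow> bit mat \<Rightarrow> bit mat \<Rightarrow> bit vec set \<Rightarrow> bool" where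
  "decodable q GS GM X \<longleftrightarrow>
     (\<forall>xs\<in>X. \<forall>xs'\<in>X. \<forall>xm\<in>carrier_vec q. \<forall>xm'\<in>carrier_vec q.
        GS *\<^sub>v xs + GM *\<^sub>v xm = GS *\<^sub>v xs' + GM *\<^sub>v xm' \<longrightarrow> xs = xs')"

definition net_rate :: "nat \<Rightarrow> nat \<Rightarrow> nat \<Rightarrow> nat \<Rightarrow> nat \<Rightarrow> bit mat \<Rightarrow> bit mat \<Rightarrow> nat" where
  "net_rate n1 n2 n3 n4 m GA GB =
     (let q = net_q n1 n2 n3 n4 m in
      Max {vectorspace.dim class_ring ((module_vec TYPE(bit) q)\<lparr>carrier := X\<rparr>) | X.
             subspace class_ring X (module_vec TYPE(bit) q) \<and>
             decodable q (G_S n1 n2 n3 n4 m GA GB) (G_M n1 n2 n3 n4 m GA GB) X})"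

definition linear_capacity :: "nat \<Rightarrow> nat \<Rightarrow> nat \<Rightarrow> nat \<Rightarrow> nat \<Rightarrow> nat" where
  "linear_capacity n1 n2 n3 n4 m =
     (let q = net_q n1 n2 n3 n4 m in
      Max {net_rate n1 n2 n3 n4 m GA GB | GA GB. GA \<in> carrier_mat q q \<and> GB \<in> carrier_mat q q})"

end

theory Submission
  imports Defs "Jordan_Normal_Form.DL_Rank"
begin


lemma shift1_vec:
  assumes x: "x \<in> carrier_vec q"
  shows "shift_mat q *\<^sub>v x = vec q (\<lambda>i. if i = 0 then 0 else x $ (i - 1))"
proof (rule eq_vecI)
  show "dim_vec (shift_mat q *\<^sub>v x) = dim_vec (vec q (\<lambda>i. if i = 0 then 0 else x $ (i - 1)))"
    by (simp add: shift_mat_def)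
  fix i assume "i < dim_vec (vec q (\<lambda>i. if i = 0 then 0 else x $ (i - 1)))"
  hence i: "i < q" by simp
  have "(shift_mat q *\<^sub>v x) $ i = (\<Sum>c<q. (if i = Suc c then 1 else 0) * x $ c)"
    using i x by (simp add: shift_mat_def scalar_prod_def row_def lessThan_atLeast0)
  also have "\<dots> = (if i = 0 then 0 else x $ (i - 1))"
  proof (cases i)
    case 0 then show ?thesis by simp
  next
    case (Suc j)
    have "(\<Sum>c<q. (if i = Suc c then 1 else 0) * x $ c) = (\<Sum>c<q. if c = j then x $ c else 0)"
      by (rule sum.cong) (auto simp: Suc)
    also have "\<dots> = x $ j" using i Suc by simp
    finally show ?thesis using Suc by simp
  qed
  finally show "(shift_mat q *\<^sub>v x) $ i = vec q (\<lambda>i. if i = 0 then 0 else x $ (i - 1)) $ i"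
    using i by simp
qed

lemma shift_mat_carrier[simp]: "shift_mat q \<in> carrier_mat q q"
  by (simp add: shift_mat_def)
lemma shift_mat_dim[simp]: "dim_row (shift_mat q) = q" "dim_col (shift_mat q) = q"
  by (simp_all add: shift_mat_def)

lemma shiftpow_vec:
  "x \<in> carrier_vec q \<Longrightarrow> (shift_mat q ^\<^sub>m j) *\<^sub>v x = vec q (\<lambda>i. if j \<le> i then x $ (i - j) else 0)"
proof (induction j arbitrary: x)
  case 0
  then show ?case by (intro eq_vecI) auto
next
  case (Suc j)
  have c: "shift_mat q ^\<^sub>m j \<in> carrier_mat q q" by (simp add: pow_mat_dim_square)
  have "(shift_mat q ^\<^sub>m Suc j) *\<^sub>v x = (shift_mat q ^\<^sub>m j) *\<^sub>v (shift_mat q *\<^sub>v x)"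
    using Suc.prems c by (simp add: assoc_mult_mat_vec[of _ q q _ q])
  also have "\<dots> = vec q (\<lambda>i. if j \<le> i then (shift_mat q *\<^sub>v x) $ (i - j) else 0)"
    by (rule Suc.IH) (rule mult_mat_vec_carrier[OF shift_mat_carrier Suc.prems])
  also have "\<dots> = vec q (\<lambda>i. if Suc j \<le> i then x $ (i - Suc j) else 0)"
    using Suc.prems by (intro eq_vecI) (auto simp: shift1_vec)
  finally show ?case .
qed



context vec_space
begin

lemma subspace_fin_dim:
  assumes X: "subspace class_ring X V"
  shows "vectorspace.fin_dim class_ring (vs X)"
proof -
  interpret W: vectorspace class_ring "vs X" using subspace_is_vs[OF X] .
  have sub: "submodule class_ring X V" using X by (simp add: subspace_def)
  have bound: "finite S \<and> card S \<le> n" if S: "S \<subseteq> carrier (vs X) \<and> W.lin_indpt S" for S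
  proof -
    have SX: "S \<subseteq> X" using S by simp
    have li: "lin_indpt S"
      using span_li_not_depend(2)[OF SX sub] S by simp
    have SC: "S \<subseteq> carrier_vec n" using SX sub by (auto simp: submodule_def subgroup_def)
    show ?thesis using li_le_dim[OF fin_dim SC li] dim_is_n by simp
  qed
  have e: "{} \<subseteq> carrier (vs X) \<and> W.lin_indpt {}"
    by (simp add: W.lin_dep_def)
  obtain A where A: "finite A" "maximal A (\<lambda>S. S \<subseteq> carrier (vs X) \<and> W.lin_indpt S)"
    using maximal_exists[of "\<lambda>S. S \<subseteq> carrier (vs X) \<and> W.lin_indpt S" n "{}", OF bound e] by blast
  have "W.basis A" by (rule W.max_li_is_basis[OF A(2)])
  then show ?thesis using A(1) unfolding W.fin_dim_def W.basis_def by blast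
qed

lemma subspace_dim_le:
  assumes X: "subspace class_ring X V"
  shows "vectorspace.dim class_ring (vs X) \<le> n"
  using subspace_dim[OF X fin_dim subspace_fin_dim[OF X]] dim_is_n by simp

end

lemma inj_dim_le:
  fixes X :: "'a::field vec set" and T :: "'a vec \<Rightarrow> 'a vec"
  assumes X: "subspace class_ring X (module_vec TYPE('a) q)"
    and T: "\<And>x. x \<in> X \<Longrightarrow> T x \<in> carrier_vec k"
    and add: "\<And>x y. x \<in> X \<Longrightarrow> y \<in> X \<Longrightarrow> T (x + y) = T x + T y"
    and sm: "\<And>a x. x \<in> X \<Longrightarrow> T (a \<cdot>\<^sub>v x) = a \<cdot>\<^sub>v T x"
    and inj: "inj_on T X"
  shows "vectorspace.dim class_ring ((module_vec TYPE('a) q)\<lparr>carrier := X\<rparr>) \<le> k"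
proof -
  interpret Vq: vec_space "TYPE('a)" q .
  interpret Vk: vec_space "TYPE('a)" k .
  interpret VX: vectorspace class_ring "Vq.vs X" using Vq.subspace_is_vs[OF X] .
  interpret L: linear_map class_ring "Vq.vs X" "module_vec TYPE('a) k" T
  proof (unfold_locales)
    show "T \<in> LinearCombinations.module_hom class_ring (Vq.vs X) (module_vec TYPE('a) k)"
      unfolding LinearCombinations.module_hom_def using T add sm by (auto simp: module_vec_simps)
  qed
  have fd: "VX.fin_dim" by (rule Vq.subspace_fin_dim[OF X])
  have "vectorspace.dim class_ring (Vk.vs L.imT) + vectorspace.dim class_ring (VX.vs L.kerT) = VX.dim"
    by (rule L.rank_nullity[OF fd])
  moreover have "vectorspace.dim class_ring (VX.vs L.kerT) = 0"
    by (rule L.inj_imp_dim_ker0) (use inj in simp)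
  moreover have "vectorspace.dim class_ring (Vk.vs L.imT) \<le> k"
    by (rule Vk.subspace_dim_le[OF L.imT_is_subspace])
  ultimately show ?thesis by simp
qed



definition X0 :: "nat \<Rightarrow> nat \<Rightarrow> 'a::field vec set" where
  "X0 q k = {x \<in> carrier_vec q. \<forall>i<q. k \<le> i \<longrightarrow> x $ i = 0}"

lemma X0_subspace: "subspace class_ring (X0 q k) (module_vec TYPE('a::field) q)"
proof -
  interpret Vq: vec_space "TYPE('a)" q .
  have "submodule class_ring (X0 q k) (module_vec TYPE('a) q)"
  proof (rule LinearCombinations.submodule.intro)
    show "Module.module class_ring (module_vec TYPE('a) q)" by (rule vec_module)
  qed (auto simp: X0_def module_vec_simps)
  then show ?thesis unfolding subspace_def using vec_vs by blast
qed

lemma X0_dim: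
  assumes kq: "k \<le> q"
  shows "k \<le> vectorspace.dim class_ring ((module_vec TYPE('a::field) q)\<lparr>carrier := X0 q k\<rparr>)"
proof -
  interpret Vq: vec_space "TYPE('a)" q .
  have X: "subspace class_ring (X0 q k) (module_vec TYPE('a) q)" by (rule X0_subspace)
  interpret VX: vectorspace class_ring "Vq.vs (X0 q k)" using Vq.subspace_is_vs[OF X] .
  have sub: "submodule class_ring (X0 q k) (module_vec TYPE('a) q)" using X by (simp add: subspace_def)
  let ?U = "unit_vec q ` {..<k} :: 'a vec set"
  have UX: "?U \<subseteq> X0 q k" using kq by (auto simp: X0_def)
  have Usub: "?U \<subseteq> set (unit_vecs q)" using kq by (auto simp: unit_vecs_def)
  have liall: "Vq.lin_indpt (set (unit_vecs q))" using Vq.unit_vecs_basis by (simp add: Vq.basis_def)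
  have liU: "Vq.lin_indpt ?U"
    by (rule Vq.subset_li_is_li[OF liall Usub])
  have liUX: "VX.lin_indpt ?U"
    using Vq.span_li_not_depend(2)[OF UX sub] liU by simp
  have "card ?U \<le> VX.dim"
    by (rule VX.li_le_dim(2)[OF Vq.subspace_fin_dim[OF X]]) (use UX liUX in auto)
  moreover have "card ?U = k"
  proof (rule trans[OF card_image], rule inj_onI)
    fix i j assume ij: "i \<in> {..<k}" "j \<in> {..<k}" "unit_vec q i = (unit_vec q j :: 'a vec)"
    have iq: "i < q" using ij kq by auto
    from ij(3) have "(unit_vec q i :: 'a vec) $ i = unit_vec q j $ i" by simp
    moreover have "(unit_vec q j :: 'a vec) $ i = (if i = j then 1 else 0)" using iq by (simp add: unit_vec_def)
    moreover have "(unit_vec q i :: 'a vec) $ i = 1" using iq by (simp add: unit_vec_def)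
    ultimately show "i = j" by (auto split: if_splits)
  qed simp
  ultimately show ?thesis by simp
qed



lemma bit_double: "(b::bit) + b = 0"
  by (metis bit_2_eq_0 mult_2 mult_zero_left)

lemma bit_cancel: "(a::bit) + b + (c + b) = a + c"
  by (metis add.assoc add.commute bit_double add_0_right)

lemma shiftpow_shiftpow:
  assumes x: "x \<in> carrier_vec q"
  shows "(shift_mat q ^\<^sub>m a) *\<^sub>v ((shift_mat q ^\<^sub>m b) *\<^sub>v x) = (shift_mat q ^\<^sub>m (a + b)) *\<^sub>v x"
proof -
  have c: "(shift_mat q ^\<^sub>m b) *\<^sub>v x \<in> carrier_vec q"
    using mult_mat_vec_carrier[OF pow_carrier_mat[OF shift_mat_carrier] x] .
  have "(shift_mat q ^\<^sub>m a) *\<^sub>v ((shift_mat q ^\<^sub>m b) *\<^sub>v x) =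
     vec q (\<lambda>i. if a \<le> i then ((shift_mat q ^\<^sub>m b) *\<^sub>v x) $ (i - a) else 0)"
    by (rule shiftpow_vec[OF c])
  also have "\<dots> = vec q (\<lambda>i. if a + b \<le> i then x $ (i - (a + b)) else 0)"
    unfolding shiftpow_vec[OF x] by (intro eq_vecI) auto
  also have "\<dots> = (shift_mat q ^\<^sub>m (a + b)) *\<^sub>v x" by (rule shiftpow_vec[OF x, symmetric])
  finally show ?thesis .
qed

lemma mult3_vec:
  assumes "P \<in> carrier_mat q q" "G \<in> carrier_mat q q" "R \<in> carrier_mat q q" "x \<in> carrier_vec q"
  shows "(P * G * R) *\<^sub>v x = P *\<^sub>v (G *\<^sub>v (R *\<^sub>v x))"
  using assms by (simp add: assoc_mult_mat_vec[of _ q q _ q])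

lemma GS_apply:
  assumes x: "x \<in> carrier_vec q" and q: "q = net_q n1 n2 n3 n4 m"
    and A: "GA \<in> carrier_mat q q" and B: "GB \<in> carrier_mat q q"
  shows "G_S n1 n2 n3 n4 m GA GB *\<^sub>v x =
    (shift_mat q ^\<^sub>m (q - n3)) *\<^sub>v (GA *\<^sub>v ((shift_mat q ^\<^sub>m (q - n1)) *\<^sub>v x)) +
    (shift_mat q ^\<^sub>m (q - n4)) *\<^sub>v (GB *\<^sub>v ((shift_mat q ^\<^sub>m (q - n2)) *\<^sub>v x))"
  unfolding G_S_def Let_def q[symmetric]
  using x A B
  by (subst add_mult_distrib_mat_vec[of _ q q])
     (auto simp: mult3_vec[OF pow_carrier_mat[OF shift_mat_carrier] A pow_carrier_mat[OF shift_mat_carrier] x]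
       mult3_vec[OF pow_carrier_mat[OF shift_mat_carrier] B pow_carrier_mat[OF shift_mat_carrier] x])

lemma GM_apply:
  assumes x: "x \<in> carrier_vec q" and q: "q = net_q n1 n2 n3 n4 m"
    and A: "GA \<in> carrier_mat q q" and B: "GB \<in> carrier_mat q q"
  shows "G_M n1 n2 n3 n4 m GA GB *\<^sub>v x =
    (shift_mat q ^\<^sub>m (q - n3)) *\<^sub>v (GA *\<^sub>v ((shift_mat q ^\<^sub>m (q - m)) *\<^sub>v x)) +
    (shift_mat q ^\<^sub>m (q - n4)) *\<^sub>v (GB *\<^sub>v ((shift_mat q ^\<^sub>m (q - m)) *\<^sub>v x))"
  unfolding G_M_def Let_def q[symmetric]
  using x A B
  by (subst add_mult_distrib_mat_vec[of _ q q])
     (auto simp: mult3_vec[OF pow_carrier_mat[OF shift_mat_carrier] A pow_carrier_mat[OF shift_mat_carrier] x]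
       mult3_vec[OF pow_carrier_mat[OF shift_mat_carrier] B pow_carrier_mat[OF shift_mat_carrier] x])



lemma net_q_ge: "n1 \<le> net_q n1 n2 n3 n4 m" "n2 \<le> net_q n1 n2 n3 n4 m" "n3 \<le> net_q n1 n2 n3 n4 m"
  "n4 \<le> net_q n1 n2 n3 n4 m" "m \<le> net_q n1 n2 n3 n4 m"
  by (auto simp: net_q_def)

lemma subspace_carrier:
  assumes "subspace class_ring X (module_vec TYPE('a::field) q)"
  shows "X \<subseteq> carrier_vec q"
  using assms unfolding subspace_def LinearCombinations.submodule_def by (auto simp: module_vec_simps)

lemma shift_eq_from_prefix:
  assumes x: "x \<in> carrier_vec q" and y: "y \<in> carrier_vec q" and k: "k \<le> q"
    and eq: "\<And>i. i < k \<Longrightarrow> x $ i = y $ i"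
  shows "(shift_mat q ^\<^sub>m (q - k)) *\<^sub>v x = (shift_mat q ^\<^sub>m (q - k)) *\<^sub>v y"
  unfolding shiftpow_vec[OF x] shiftpow_vec[OF y]
proof (intro eq_vecI)
  fix i assume "i < dim_vec (vec q (\<lambda>i. if q - k \<le> i then y $ (i - (q - k)) else 0))"
  then have i: "i < q" by simp
  show "vec q (\<lambda>i. if q - k \<le> i then x $ (i - (q - k)) else 0) $ i =
        vec q (\<lambda>i. if q - k \<le> i then y $ (i - (q - k)) else 0) $ i"
  proof (cases "q - k \<le> i")
    case True
    then have "i - (q - k) < k" using i k by linarith
    then show ?thesis using i True eq by simp
  qed (use i in simp)
qed simp

lemma vec_cancel:
  assumes "a \<in> carrier_vec q" "b \<in> carrier_vec q" "c \<in> carrier_vec q"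
  shows "a + b + (c + (b :: bit vec)) = a + c"
  using assms by (intro eq_vecI) (simp_all add: bit_cancel del: add_bit_eq_xor)

lemma shift_carrier: "x \<in> carrier_vec q \<Longrightarrow> (shift_mat q ^\<^sub>m j) *\<^sub>v x \<in> carrier_vec q"
  by (rule mult_mat_vec_carrier[OF pow_carrier_mat[OF shift_mat_carrier]])

lemma upper:
  fixes n1 n2 n3 n4 m :: nat
  assumes h: "n1 > n2" "n4 \<ge> n3" "m > n2"
    and q: "q = net_q n1 n2 n3 n4 m"
    and A: "GA \<in> carrier_mat q q" and B: "GB \<in> carrier_mat q q"
    and X: "subspace class_ring X (module_vec TYPE(bit) q)"
    and dec: "decodable q (G_S n1 n2 n3 n4 m GA GB) (G_M n1 n2 n3 n4 m GA GB) X"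
  shows "vectorspace.dim class_ring ((module_vec TYPE(bit) q)\<lparr>carrier := X\<rparr>) \<le> min n1 n3"
proof -
  have qge: "n1 \<le> q" "n2 \<le> q" "n3 \<le> q" "n4 \<le> q" "m \<le> q" using net_q_ge q by auto
  have XC: "X \<subseteq> carrier_vec q" by (rule subspace_carrier[OF X])
  let ?GS = "G_S n1 n2 n3 n4 m GA GB" and ?GM = "G_M n1 n2 n3 n4 m GA GB"
  let ?Q = "\<lambda>j. shift_mat q ^\<^sub>m j"
  have Qc: "\<And>j. ?Q j \<in> carrier_mat q q" by simp
  have decD: "x = x'" if "x \<in> X" "x' \<in> X" "xm \<in> carrier_vec q" "xm' \<in> carrier_vec q"
     "?GS *\<^sub>v x + ?GM *\<^sub>v xm = ?GS *\<^sub>v x' + ?GM *\<^sub>v xm'" for x x' xm xm'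
  proof -
    have D: "\<forall>xs\<in>X. \<forall>xs'\<in>X. \<forall>xm\<in>carrier_vec q. \<forall>xm'\<in>carrier_vec q.
        ?GS *\<^sub>v xs + ?GM *\<^sub>v xm = ?GS *\<^sub>v xs' + ?GM *\<^sub>v xm' \<longrightarrow> xs = xs'"
      using dec by (simp only: decodable_def)
    show ?thesis using D that(1-4) that(5) by blast
  qed
  have d1: "vectorspace.dim class_ring ((module_vec TYPE(bit) q)\<lparr>carrier := X\<rparr>) \<le> n1"
  proof (rule inj_dim_le[OF X, where T = "\<lambda>x. vec n1 (\<lambda>i. x $ i)"])
    show "\<And>x y. x \<in> X \<Longrightarrow> y \<in> X \<Longrightarrow> vec n1 (\<lambda>i. (x + y) $ i) = vec n1 (\<lambda>i. x $ i) + vec n1 (\<lambda>i. y $ i)"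
      using XC qge by (intro eq_vecI) auto
    show "\<And>a x. x \<in> X \<Longrightarrow> vec n1 (\<lambda>i. (a \<cdot>\<^sub>v x) $ i) = a \<cdot>\<^sub>v vec n1 (\<lambda>i. x $ i)"
      using XC qge by (intro eq_vecI) auto
    show "inj_on (\<lambda>x. vec n1 (\<lambda>i. x $ i)) X"
    proof (rule inj_onI)
      fix x x' assume xX: "x \<in> X" "x' \<in> X" and e: "vec n1 (\<lambda>i. x $ i) = vec n1 (\<lambda>i. x' $ i)"
      have xc: "x \<in> carrier_vec q" "x' \<in> carrier_vec q" using xX XC by auto
      have ei: "x $ i = x' $ i" if "i < n1" for i
        using arg_cong[OF e, of "\<lambda>v. v $ i"] that by simp
      have e1: "?Q (q - n1) *\<^sub>v x = ?Q (q - n1) *\<^sub>v x'"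
        by (rule shift_eq_from_prefix[OF xc qge(1)]) (rule ei)
      have e2: "?Q (q - n2) *\<^sub>v x = ?Q (q - n2) *\<^sub>v x'"
        by (rule shift_eq_from_prefix[OF xc qge(2)]) (use ei h in auto)
      have "?GS *\<^sub>v x = ?GS *\<^sub>v x'"
        unfolding GS_apply[OF xc(1) q A B] GS_apply[OF xc(2) q A B] e1 e2 ..
      then show "x = x'"
        by (intro decD[OF xX zero_carrier_vec zero_carrier_vec]) simp
    qed
  qed simp
  define N where "N = GA * (?Q (q - n1) + ?Q (q - n2))"
  have Nc: "N \<in> carrier_mat q q" using A by (simp add: N_def)
  have Nx: "N *\<^sub>v x = GA *\<^sub>v (?Q (q - n1) *\<^sub>v x) + GA *\<^sub>v (?Q (q - n2) *\<^sub>v x)"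
    if x: "x \<in> carrier_vec q" for x
  proof -
    have "N *\<^sub>v x = GA *\<^sub>v ((?Q (q - n1) + ?Q (q - n2)) *\<^sub>v x)"
      unfolding N_def by (rule assoc_mult_mat_vec[OF A _ x]) (rule add_carrier_mat; simp)
    also have "\<dots> = GA *\<^sub>v (?Q (q - n1) *\<^sub>v x + ?Q (q - n2) *\<^sub>v x)"
      by (subst add_mult_distrib_mat_vec[of _ q q]) (simp_all add: x)
    also have "\<dots> = GA *\<^sub>v (?Q (q - n1) *\<^sub>v x) + GA *\<^sub>v (?Q (q - n2) *\<^sub>v x)"
      by (rule mult_add_distrib_mat_vec[OF A]) (simp_all add: x mult_mat_vec_carrier[OF pow_carrier_mat[OF shift_mat_carrier] x])
    finally show ?thesis .
  qed
  have key: "?GS *\<^sub>v x + ?GM *\<^sub>v (?Q (m - n2) *\<^sub>v x) = ?Q (q - n3) *\<^sub>v (N *\<^sub>v x)"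
    if x: "x \<in> carrier_vec q" for x
  proof -
    have xm: "?Q (m - n2) *\<^sub>v x \<in> carrier_vec q" using x by (rule shift_carrier)
    have qq: "?Q (q - m) *\<^sub>v (?Q (m - n2) *\<^sub>v x) = ?Q (q - n2) *\<^sub>v x"
      using shiftpow_shiftpow[OF x, of "q - m" "m - n2"] h qge by simp
    have r: "?Q (q - n3) *\<^sub>v (N *\<^sub>v x) = ?Q (q - n3) *\<^sub>v (GA *\<^sub>v (?Q (q - n1) *\<^sub>v x)) + ?Q (q - n3) *\<^sub>v (GA *\<^sub>v (?Q (q - n2) *\<^sub>v x))"
      unfolding Nx[OF x]
      by (rule mult_add_distrib_mat_vec[OF pow_carrier_mat[OF shift_mat_carrier]])
         (rule mult_mat_vec_carrier[OF A shift_carrier[OF x]])+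
    show ?thesis
      unfolding GS_apply[OF x q A B] GM_apply[OF xm q A B] qq r
      by (rule vec_cancel; rule shift_carrier; rule mult_mat_vec_carrier[OF _ shift_carrier[OF x]]) (simp_all add: A B)
  qed
  have d3: "vectorspace.dim class_ring ((module_vec TYPE(bit) q)\<lparr>carrier := X\<rparr>) \<le> n3"
  proof (rule inj_dim_le[OF X, where T = "\<lambda>x. vec n3 (\<lambda>i. (N *\<^sub>v x) $ i)"])
    show "\<And>x y. x \<in> X \<Longrightarrow> y \<in> X \<Longrightarrow> vec n3 (\<lambda>i. (N *\<^sub>v (x + y)) $ i) = vec n3 (\<lambda>i. (N *\<^sub>v x) $ i) + vec n3 (\<lambda>i. (N *\<^sub>v y) $ i)"
    proof -
      fix x y assume "x \<in> X" "y \<in> X"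
      then have xy: "x \<in> carrier_vec q" "y \<in> carrier_vec q" using XC by auto
      have "N *\<^sub>v (x + y) = N *\<^sub>v x + N *\<^sub>v y" by (rule mult_add_distrib_mat_vec[OF Nc xy])
      then show "vec n3 (\<lambda>i. (N *\<^sub>v (x + y)) $ i) = vec n3 (\<lambda>i. (N *\<^sub>v x) $ i) + vec n3 (\<lambda>i. (N *\<^sub>v y) $ i)"
        using qge(3) Nc xy by (intro eq_vecI) (simp_all del: add_bit_eq_xor)
    qed
    show "\<And>a x. x \<in> X \<Longrightarrow> vec n3 (\<lambda>i. (N *\<^sub>v (a \<cdot>\<^sub>v x)) $ i) = a \<cdot>\<^sub>v vec n3 (\<lambda>i. (N *\<^sub>v x) $ i)"
    proof -
      fix a x assume "x \<in> X"
      then have xy: "x \<in> carrier_vec q" using XC by auto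
      have "N *\<^sub>v (a \<cdot>\<^sub>v x) = a \<cdot>\<^sub>v (N *\<^sub>v x)" by (rule mult_mat_vec[OF Nc xy])
      then show "vec n3 (\<lambda>i. (N *\<^sub>v (a \<cdot>\<^sub>v x)) $ i) = a \<cdot>\<^sub>v vec n3 (\<lambda>i. (N *\<^sub>v x) $ i)"
        using qge(3) Nc xy by (intro eq_vecI) (simp_all del: add_bit_eq_xor mult_bit_eq_and)
    qed
    show "inj_on (\<lambda>x. vec n3 (\<lambda>i. (N *\<^sub>v x) $ i)) X"
    proof (rule inj_onI)
      fix x x' assume xX: "x \<in> X" "x' \<in> X" and e: "vec n3 (\<lambda>i. (N *\<^sub>v x) $ i) = vec n3 (\<lambda>i. (N *\<^sub>v x') $ i)"
      have xc: "x \<in> carrier_vec q" "x' \<in> carrier_vec q" using xX XC by auto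
      have Nxc: "N *\<^sub>v x \<in> carrier_vec q" "N *\<^sub>v x' \<in> carrier_vec q" using xc Nc by auto
      have ei: "(N *\<^sub>v x) $ i = (N *\<^sub>v x') $ i" if "i < n3" for i
        using arg_cong[OF e, of "\<lambda>v. v $ i"] that by simp
      have e3: "?Q (q - n3) *\<^sub>v (N *\<^sub>v x) = ?Q (q - n3) *\<^sub>v (N *\<^sub>v x')"
        by (rule shift_eq_from_prefix[OF Nxc qge(3)]) (rule ei)
      have xm: "?Q (m - n2) *\<^sub>v x \<in> carrier_vec q" "?Q (m - n2) *\<^sub>v x' \<in> carrier_vec q"
        using xc by (auto intro: shift_carrier)
      show "x = x'"
        by (rule decD[OF xX xm]) (simp only: key[OF xc(1)] key[OF xc(2)] e3)
    qed
  qed simp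
  show ?thesis using d1 d3 by simp
qed



definition up_mat :: "nat \<Rightarrow> nat \<Rightarrow> bit mat" where
  "up_mat q j = mat q q (\<lambda>(i, c). if c = i + j then 1 else 0)"

lemma up_mat_carrier[simp]: "up_mat q j \<in> carrier_mat q q"
  by (simp add: up_mat_def)

lemma up_vec:
  assumes y: "y \<in> carrier_vec q" and i: "i < q"
  shows "(up_mat q j *\<^sub>v y) $ i = (if i + j < q then y $ (i + j) else 0)"
proof -
  have "(up_mat q j *\<^sub>v y) $ i = (\<Sum>c<q. (if c = i + j then 1 else 0) * y $ c)"
    using i y by (simp add: up_mat_def scalar_prod_def row_def lessThan_atLeast0 del: mult_bit_eq_and)
  also have "\<dots> = (\<Sum>c<q. if c = i + j then y $ c else 0)"
    by (rule sum.cong) auto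
  also have "\<dots> = (if i + j < q then y $ (i + j) else 0)" by simp
  finally show ?thesis .
qed

lemma shift_index:
  assumes x: "x \<in> carrier_vec q" and i: "i < q"
  shows "((shift_mat q ^\<^sub>m j) *\<^sub>v x) $ i = (if j \<le> i then x $ (i - j) else 0)"
  using i by (simp add: shiftpow_vec[OF x])

lemma lower:
  fixes n1 n2 n3 n4 m :: nat
  assumes h: "n1 > n2" "n4 \<ge> n3" "m > n2"
    and q: "q = net_q n1 n2 n3 n4 m"
  defines "GA \<equiv> up_mat q (q - n1)"
  defines "GB \<equiv> (shift_mat q ^\<^sub>m (n4 - n3)) * GA"
  shows "decodable q (G_S n1 n2 n3 n4 m GA GB) (G_M n1 n2 n3 n4 m GA GB) (X0 q (min n1 n3))"
proof -
  have qge: "n1 \<le> q" "n2 \<le> q" "n3 \<le> q" "n4 \<le> q" "m \<le> q" using net_q_ge q by auto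
  let ?GS = "G_S n1 n2 n3 n4 m GA GB" and ?GM = "G_M n1 n2 n3 n4 m GA GB"
  let ?Q = "\<lambda>j. shift_mat q ^\<^sub>m j"
  let ?k = "min n1 n3"
  have A: "GA \<in> carrier_mat q q" by (simp add: GA_def)
  have B: "GB \<in> carrier_mat q q" unfolding GB_def by (rule mult_carrier_mat[OF _ A]) simp
  have GBv: "?Q (q - n4) *\<^sub>v (GB *\<^sub>v y) = ?Q (q - n3) *\<^sub>v (GA *\<^sub>v y)" if y: "y \<in> carrier_vec q" for y
  proof -
    have Ay: "GA *\<^sub>v y \<in> carrier_vec q" using A y by simp
    have "GB *\<^sub>v y = ?Q (n4 - n3) *\<^sub>v (GA *\<^sub>v y)"
      unfolding GB_def by (rule assoc_mult_mat_vec[OF pow_carrier_mat[OF shift_mat_carrier] A y])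
    then show ?thesis using shiftpow_shiftpow[OF Ay, of "q - n4" "n4 - n3"] qge h by simp
  qed
  have GM0: "?GM *\<^sub>v xm = 0\<^sub>v q" if xm: "xm \<in> carrier_vec q" for xm
  proof -
    have c: "?Q (q - n3) *\<^sub>v (GA *\<^sub>v (?Q (q - m) *\<^sub>v xm)) \<in> carrier_vec q"
      by (rule shift_carrier, rule mult_mat_vec_carrier[OF A shift_carrier[OF xm]])
    show ?thesis
      unfolding GM_apply[OF xm q A B] GBv[OF shift_carrier[OF xm]]
      using c by (intro eq_vecI) (simp_all add: bit_double del: add_bit_eq_xor)
  qed
  have GSi: "(?GS *\<^sub>v x) $ (q - n3 + t) = x $ t + (if n1 - n2 \<le> t then x $ (t - (n1 - n2)) else 0)"
    if x: "x \<in> carrier_vec q" and t: "t < ?k" for x t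
  proof -
    have tq: "t < n1" "t < n3" using t by auto
    have e: "?GS *\<^sub>v x = ?Q (q - n3) *\<^sub>v (GA *\<^sub>v (?Q (q - n1) *\<^sub>v x)) + ?Q (q - n3) *\<^sub>v (GA *\<^sub>v (?Q (q - n2) *\<^sub>v x))"
      unfolding GS_apply[OF x q A B] GBv[OF shift_carrier[OF x]] ..
    have i: "q - n3 + t < q" using tq qge by linarith
    have j: "t + (q - n1) < q" using tq qge by linarith
    have s1: "(?Q (q - n3) *\<^sub>v (GA *\<^sub>v y)) $ (q - n3 + t) = y $ (t + (q - n1))" if y: "y \<in> carrier_vec q" for y
    proof -
      have "(?Q (q - n3) *\<^sub>v (GA *\<^sub>v y)) $ (q - n3 + t) = (GA *\<^sub>v y) $ t"
        by (subst shift_index[OF mult_mat_vec_carrier[OF A y] i]) simp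
      also have "\<dots> = y $ (t + (q - n1))"
        unfolding GA_def using j by (subst up_vec[OF y]) auto
      finally show ?thesis .
    qed
    have c1: "(q - n1 \<le> t + (q - n1))" by simp
    have c2: "(q - n2 \<le> t + (q - n1)) = (n1 - n2 \<le> t)" using h qge by linarith
    have c3: "t + (q - n1) - (q - n2) = t - (n1 - n2)" using h qge by linarith
    have "(?GS *\<^sub>v x) $ (q - n3 + t) = (?Q (q - n3) *\<^sub>v (GA *\<^sub>v (?Q (q - n1) *\<^sub>v x))) $ (q - n3 + t)
        + (?Q (q - n3) *\<^sub>v (GA *\<^sub>v (?Q (q - n2) *\<^sub>v x))) $ (q - n3 + t)"
      unfolding e using i by (subst index_add_vec(1)) simp_all
    also have "\<dots> = (?Q (q - n1) *\<^sub>v x) $ (t + (q - n1)) + (?Q (q - n2) *\<^sub>v x) $ (t + (q - n1))"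
      by (simp only: s1[OF shift_carrier[OF x]])
    also have "\<dots> = x $ t + (if n1 - n2 \<le> t then x $ (t - (n1 - n2)) else 0)"
      by (simp only: shift_index[OF x j] c2 c3) simp
    finally show ?thesis .
  qed
  show ?thesis unfolding decodable_def q[symmetric]
  proof (intro ballI impI)
    fix x x' xm xm' assume xX: "x \<in> X0 q ?k" "x' \<in> X0 q ?k" and xm: "xm \<in> carrier_vec q" "xm' \<in> carrier_vec q"
      and eq: "?GS *\<^sub>v x + ?GM *\<^sub>v xm = ?GS *\<^sub>v x' + ?GM *\<^sub>v xm'"
    have xc: "x \<in> carrier_vec q" "x' \<in> carrier_vec q" using xX by (auto simp: X0_def)
    have gc: "?GS *\<^sub>v x \<in> carrier_vec q" "?GS *\<^sub>v x' \<in> carrier_vec q"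
      unfolding GS_apply[OF xc(1) q A B] GS_apply[OF xc(2) q A B]
      by (intro add_carrier_vec shift_carrier mult_mat_vec_carrier[OF A] mult_mat_vec_carrier[OF B] xc)+
    have eq2: "?GS *\<^sub>v x = ?GS *\<^sub>v x'"
      using eq unfolding GM0[OF xm(1)] GM0[OF xm(2)] right_zero_vec[OF gc(1)] right_zero_vec[OF gc(2)] .
    have all: "t < ?k \<longrightarrow> x $ t = x' $ t" for t
    proof (induction t rule: less_induct)
      case (less t)
      show ?case
      proof
        assume t: "t < ?k"
        have "(?GS *\<^sub>v x) $ (q - n3 + t) = (?GS *\<^sub>v x') $ (q - n3 + t)" by (simp only: eq2)
        then have E: "x $ t + (if n1 - n2 \<le> t then x $ (t - (n1 - n2)) else 0) =
                   x' $ t + (if n1 - n2 \<le> t then x' $ (t - (n1 - n2)) else 0)"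
          by (simp only: GSi[OF xc(1) t] GSi[OF xc(2) t])
        have "(if n1 - n2 \<le> t then x $ (t - (n1 - n2)) else 0) = (if n1 - n2 \<le> t then x' $ (t - (n1 - n2)) else 0)"
          using less.IH[of "t - (n1 - n2)"] h t by auto
        then show "x $ t = x' $ t" using E by (simp del: add_bit_eq_xor)
      qed
    qed
    show "x = x'"
    proof (rule eq_vecI)
      fix i assume "i < dim_vec x'"
      then have i: "i < q" using xc by simp
      show "x $ i = x' $ i"
      proof (cases "i < ?k")
        case True then show ?thesis using all by blast
      next
        case False
        then have "?k \<le> i" by linarith
        then show ?thesis using xX i unfolding X0_def by auto
      qed
    qed (use xc in simp)
  qed
qed



lemma X0_zero_dec: "decodable q GS GM (X0 q 0)"
  unfolding decodable_def
proof (intro ballI impI)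
  fix x x' :: "bit vec" assume "x \<in> X0 q 0" "x' \<in> X0 q 0"
  then show "x = x'" unfolding X0_def by (intro eq_vecI) auto
qed

theorem mainTheorem7:
  fixes n1 n2 n3 n4 m :: nat
  assumes "n1 > n2" and "n4 \<ge> n3" and "m > n2"
  shows "linear_capacity n1 n2 n3 n4 m = min n1 n3"
proof -
  define q where "q = net_q n1 n2 n3 n4 m"
  define c where "c = min n1 n3"
  have cq: "c \<le> q" using net_q_ge[of n1 n2 n3 n4 m] unfolding c_def q_def by linarith
  define S where "S = (\<lambda>GA GB. {vectorspace.dim class_ring ((module_vec TYPE(bit) q)\<lparr>carrier := X\<rparr>) | X.
             subspace class_ring X (module_vec TYPE(bit) q) \<and>
             decodable q (G_S n1 n2 n3 n4 m GA GB) (G_M n1 n2 n3 n4 m GA GB) X})"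
  have rate: "net_rate n1 n2 n3 n4 m GA GB = Max (S GA GB)" for GA GB
    by (simp add: net_rate_def Let_def q_def S_def)
  have Sbound: "y \<le> c" if "GA \<in> carrier_mat q q" "GB \<in> carrier_mat q q" "y \<in> S GA GB" for GA GB y
  proof -
    from that(3) obtain X where X: "y = vectorspace.dim class_ring ((module_vec TYPE(bit) q)\<lparr>carrier := X\<rparr>)"
      "subspace class_ring X (module_vec TYPE(bit) q)"
      "decodable q (G_S n1 n2 n3 n4 m GA GB) (G_M n1 n2 n3 n4 m GA GB) X"
      unfolding S_def by blast
    show ?thesis unfolding X(1) c_def by (rule upper[OF assms q_def that(1,2) X(2,3)])
  qed
  have Sfin: "finite (S GA GB)" if "GA \<in> carrier_mat q q" "GB \<in> carrier_mat q q" for GA GB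
    by (rule finite_subset[of _ "{..c}"]) (use Sbound[OF that] in auto)
  have Sne: "vectorspace.dim class_ring ((module_vec TYPE(bit) q)\<lparr>carrier := X0 q 0\<rparr>) \<in> S GA GB" for GA GB
    unfolding S_def using X0_subspace X0_zero_dec by blast
  have rate_le: "net_rate n1 n2 n3 n4 m GA GB \<le> c" if "GA \<in> carrier_mat q q" "GB \<in> carrier_mat q q" for GA GB
    unfolding rate using Sfin[OF that] Sne Sbound[OF that] by (subst Max_le_iff) auto
  define GA0 where "GA0 = up_mat q (q - n1)"
  define GB0 where "GB0 = (shift_mat q ^\<^sub>m (n4 - n3)) * GA0"
  have A0: "GA0 \<in> carrier_mat q q" by (simp add: GA0_def)
  have B0: "GB0 \<in> carrier_mat q q" unfolding GB0_def by (rule mult_carrier_mat[OF _ A0]) simp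
  have dec0: "decodable q (G_S n1 n2 n3 n4 m GA0 GB0) (G_M n1 n2 n3 n4 m GA0 GB0) (X0 q c)"
    unfolding GA0_def GB0_def c_def by (rule lower[OF assms q_def])
  have dimc: "vectorspace.dim class_ring ((module_vec TYPE(bit) q)\<lparr>carrier := X0 q c\<rparr>) = c"
  proof (rule le_antisym)
    have "vectorspace.dim class_ring ((module_vec TYPE(bit) q)\<lparr>carrier := X0 q c\<rparr>) \<in> S GA0 GB0"
      unfolding S_def using dec0 X0_subspace by blast
    then show "vectorspace.dim class_ring ((module_vec TYPE(bit) q)\<lparr>carrier := X0 q c\<rparr>) \<le> c"
      by (rule Sbound[OF A0 B0])
    show "c \<le> vectorspace.dim class_ring ((module_vec TYPE(bit) q)\<lparr>carrier := X0 q c\<rparr>)"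
      by (rule X0_dim[OF cq])
  qed
  have cS: "c \<in> S GA0 GB0"
  proof -
    have "vectorspace.dim class_ring ((module_vec TYPE(bit) q)\<lparr>carrier := X0 q c\<rparr>) \<in> S GA0 GB0"
      unfolding S_def using dec0 X0_subspace by blast
    then show ?thesis unfolding dimc .
  qed
  have rate0: "net_rate n1 n2 n3 n4 m GA0 GB0 = c"
    unfolding rate by (rule Max_eqI[OF Sfin[OF A0 B0] Sbound[OF A0 B0] cS])
  define T where "T = {net_rate n1 n2 n3 n4 m GA GB | GA GB. GA \<in> carrier_mat q q \<and> GB \<in> carrier_mat q q}"
  have cap: "linear_capacity n1 n2 n3 n4 m = Max T"
    by (simp add: linear_capacity_def Let_def q_def T_def)
  have Tb: "y \<le> c" if "y \<in> T" for y
  proof -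
    from that obtain GA GB where "y = net_rate n1 n2 n3 n4 m GA GB" "GA \<in> carrier_mat q q" "GB \<in> carrier_mat q q"
      unfolding T_def by blast
    then show ?thesis using rate_le by simp
  qed
  have Tfin: "finite T" by (rule finite_subset[of _ "{..c}"]) (use Tb in auto)
  have cT: "c \<in> T" unfolding T_def
    by (rule CollectI, rule exI[of _ GA0], rule exI[of _ GB0]) (simp add: rate0 A0 B0)
  show ?thesis unfolding cap c_def[symmetric] by (rule Max_eqI[OF Tfin Tb cT])
qed

end
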